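(* Let $c,d>0$ with $\frac1c+\frac1d\ge1$ and $g(x)=xF(c,d;c+d;x)$ for $x\in(0,1)$. Then for all $x>0$ and $p,q\in\mathbb{R}$, $$g\!\left(\frac{x^p}{1+x^p}\right)g\!\left(\frac{x^q}{1+x^q}\right)\le g^2\!\left(\frac{x^{(p+q)/2}}{1+x^{(p+q)/2}}\right).$$
   Context: $F(a,b;c;x)$ is the Gaussian hypergeometric function $\sum_{n\ge0}\frac{(a)_n(b)_n}{(c)_n}\frac{x^n}{n!}$ ($|x|<1$), with $(a)_n=a(a+1)\cdots(a+n-1)$, $(a)_0=1$. $g^2(y)=(g(y))^2$. *)

theory Defs
  imports "HOL-Analysis.Analysis"
begin

text \<open>Gaussian hypergeometric function F(a,b;c;x) = sum_n (a)_n (b)_n / (c)_n * x^n / n!,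
  intended for |x| < 1.\<close>
definition hyp2F1 :: "real \<Rightarrow> real \<Rightarrow> real \<Rightarrow> real \<Rightarrow> real" where
  "hyp2F1 a b c x = (\<Sum>n. pochhammer a n * pochhammer b n / pochhammer c n * x ^ n / fact n)"

end

theory Submission
  imports Defs
begin

definition aa :: "real \<Rightarrow> real \<Rightarrow> nat \<Rightarrow> real" where
  "aa c d n = pochhammer c n * pochhammer d n / pochhammer (c+d) n / fact n"

definition sg :: "real \<Rightarrow> real" where "sg t = exp t / (1 + exp t)"

lemma sg_pos: "0 < sg t" unfolding sg_def by (simp add: add_pos_pos)
lemma sg_lt1: "sg t < 1" unfolding sg_def by (simp add: add_pos_pos)

lemma sg_mono: "s \<le> t \<Longrightarrow> sg s \<le> sg t"
proof -
  assume st: "s \<le> t"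
  have "exp s \<le> exp t" using st by simp
  then have "exp s * (1 + exp t) \<le> exp t * (1 + exp s)" by (simp add: algebra_simps)
  then show ?thesis unfolding sg_def by (simp add: divide_simps add_pos_pos)
qed

lemma sg_deriv: "(sg has_real_derivative (sg t * (1 - sg t))) (at t)"
proof -
  have p: "1 + exp t \<noteq> 0" using exp_gt_zero[of t] by linarith
  have "((\<lambda>t. exp t / (1 + exp t)) has_real_derivative
        ((exp t * (1 + exp t) - exp t * exp t) / ((1 + exp t) * (1 + exp t)))) (at t)"
    by (rule derivative_eq_intros refl | use p in simp)+
  moreover have "(exp t * (1 + exp t) - exp t * exp t) / ((1 + exp t) * (1 + exp t)) = sg t * (1 - sg t)"
    unfolding sg_def using p by (simp add: field_simps)
  ultimately show ?thesis unfolding sg_def[abs_def] by simp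
qed

context
  fixes c d :: real
  assumes cpos: "c > 0" and dpos: "d > 0" and cdle: "c * d \<le> c + d"
begin

lemma aa_pos: "aa c d n > 0"
  unfolding aa_def using cpos dpos by (auto intro!: divide_pos_pos mult_pos_pos pochhammer_pos)

lemma aa_Suc: "aa c d (Suc n) = aa c d n * ((c+n)*(d+n)) / ((c+d+n)*(n+1))"
proof -
  have p: "pochhammer (c+d) n > 0" using cpos dpos by (auto intro!: pochhammer_pos)
  have q: "c + d + n > 0" using cpos dpos by simp
  show ?thesis unfolding aa_def using p q
    by (simp add: pochhammer_Suc fact_Suc field_simps)
qed

lemma aa_0: "aa c d 0 = 1" by (simp add: aa_def)

lemma aa_ratio_le: fixes n :: nat shows "(c+n)*(d+n) \<le> (c+d+n)*(n+1)"
proof -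
  have "(c+n)*(d+n) = c*d + (c+d)*n + n*n" by (simp add: algebra_simps)
  also have "\<dots> \<le> (c + d) + (c+d)*n + n + n*n" using cdle by (simp add: add_increasing)
  also have "\<dots> = (c+d+n)*(n+1)" by (simp add: algebra_simps)
  finally show ?thesis .
qed

lemma aa_decr: "aa c d (Suc n) \<le> aa c d n"
proof -
  have q: "(c + d + n)*(n+1) > 0" using cpos dpos by simp
  have "aa c d (Suc n) = aa c d n * (((c+n)*(d+n)) / ((c+d+n)*(n+1)))" by (simp add: aa_Suc)
  also have "\<dots> \<le> aa c d n * 1"
    using aa_pos[of n] q aa_ratio_le[of n] by (intro mult_left_mono) (auto simp: divide_le_eq_1 add.commute)
  finally show ?thesis by simp
qed

lemma aa_le1: "aa c d n \<le> 1"
proof (induction n)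
  case 0 then show ?case by (simp add: aa_0)
next
  case (Suc n) then show ?case using aa_decr[of n] by linarith
qed


definition ss :: "nat \<Rightarrow> real" where "ss n = (\<Sum>k\<le>n. aa c d k)"

lemma ss_pos: "ss n > 0"
  unfolding ss_def using aa_pos by (intro sum_pos) auto

lemma ss_le: "ss n \<le> real n + 1"
proof -
  have "ss n \<le> (\<Sum>k\<le>n. (1::real))" unfolding ss_def by (intro sum_mono aa_le1)
  then show ?thesis by simp
qed

lemma ss_Suc: "ss (Suc n) = ss n + aa c d (Suc n)"
  unfolding ss_def by simp

lemma aa_SucSuc: "aa c d (Suc n) * ((c+d+n)*(n+1)) = aa c d n * ((c+n)*(d+n))"
proof -
  have q: "c + d + real n \<noteq> 0" using cpos dpos by (simp add: add_pos_nonneg)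
  have q2: "real n + 1 \<noteq> 0" by simp
  show ?thesis using q q2 by (simp add: aa_Suc)
qed

lemma ss_bound: "ss n * (c*d) \<le> (n+1)*(n+c+d) * aa c d (Suc n)"
proof (induction n)
  case 0
  have "aa c d (Suc 0) * (c+d) = c * d" using aa_SucSuc[of 0] by (simp add: aa_0)
  then show ?case by (simp add: ss_def aa_0 algebra_simps)
next
  case (Suc n)
  have e: "aa c d (Suc (Suc n)) * ((c+d+(n+1))*(n+2)) = aa c d (Suc n) * ((c+(n+1))*(d+(n+1)))"
    using aa_SucSuc[of "Suc n"] by (simp add: algebra_simps)
  have "ss (Suc n) * (c*d) = ss n * (c*d) + aa c d (Suc n) * (c*d)" by (simp add: ss_Suc algebra_simps)
  also have "\<dots> \<le> (n+1)*(n+c+d) * aa c d (Suc n) + aa c d (Suc n) * (c*d)" using Suc by (simp add: add.commute)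
  also have "\<dots> = aa c d (Suc n) * ((n+1)*(n+c+d) + c*d)" by (simp add: algebra_simps)
  also have "\<dots> \<le> aa c d (Suc n) * ((c+(n+1))*(d+(n+1)))"
    using aa_pos[of "Suc n"] by (intro mult_left_mono) (auto simp: algebra_simps)
  also have "\<dots> = (real (Suc n)+1)*(real (Suc n)+c+d) * aa c d (Suc (Suc n))"
    using e by (simp add: algebra_simps)
  finally show ?case .
qed

lemma rho_step: "(n+2) * aa c d (Suc n) * ss n \<le> (n+1) * aa c d n * ss (Suc n)"
proof -
  define X where "X = aa c d n"
  define Y where "Y = aa c d (Suc n)"
  define s where "s = ss n"
  define P where "P = c*d"
  define S where "S = c+d"
  define N where "N = (n+2)*((c+n)*(d+n)) - (n+1)^2*(S+n)"
  have XY: "Y * ((S+n)*(n+1)) = X * ((c+n)*(d+n))" using aa_SucSuc[of n] by (simp add: X_def Y_def S_def)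
  have Xp: "X > 0" and Yp: "Y > 0" and sp: "s > 0" using aa_pos ss_pos by (auto simp: X_def Y_def s_def)
  have Pp: "P > 0" using cpos dpos by (simp add: P_def)
  have Sn: "(S+n)*(n+1) > 0" using cpos dpos by (simp add: S_def)
  have sb: "s * P \<le> (n+1)*(n+S)*Y" using ss_bound[of n] by (simp add: s_def P_def S_def Y_def algebra_simps)
  have Neq: "N = n*(P-1) + 2*P - S" by (simp add: N_def P_def S_def power2_eq_square algebra_simps)
  have NP: "N \<le> P*(n+1)" using Neq cdle by (simp add: P_def S_def algebra_simps)
  have key: "s * N \<le> (n+1)^2*(S+n)*Y"
  proof (cases "N \<le> 0")
    case True
    then have "s * N \<le> 0" using sp by (simp add: mult_nonneg_nonpos)
    also have "0 \<le> (n+1)^2*(S+n)*Y" using Yp cpos dpos by (simp add: S_def)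
    finally show ?thesis .
  next
    case False
    have "s * N * P = (s*P) * N" by simp
    also have "\<dots> \<le> ((n+1)*(n+S)*Y) * N" using sb False by (intro mult_right_mono) auto
    also have "\<dots> \<le> ((n+1)*(n+S)*Y) * (P*(n+1))" using NP Yp cpos dpos
      by (intro mult_left_mono) (auto simp: S_def)
    also have "\<dots> = ((n+1)^2*(S+n)*Y) * P" by (simp add: power2_eq_square algebra_simps)
    finally show ?thesis using Pp by simp
  qed
  have "((n+1) * X * (s + Y) - (n+2) * Y * s) * ((S+n)*(n+1))
        = X * ((n+1)^2*(S+n)*Y - s * N)"
  proof -
    have "((n+1) * X * (s + Y) - (n+2) * Y * s) * ((S+n)*(n+1))
        = (n+1) * X * (s + Y) * ((S+n)*(n+1)) - (n+2) * s * (Y * ((S+n)*(n+1)))"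
      by (simp add: algebra_simps)
    also have "\<dots> = (n+1) * X * (s + Y) * ((S+n)*(n+1)) - (n+2) * s * (X * ((c+n)*(d+n)))"
      by (simp only: XY)
    also have "\<dots> = X * ((n+1)^2*(S+n)*Y - s * N)"
      by (simp add: N_def power2_eq_square algebra_simps)
    finally show ?thesis .
  qed
  moreover have "X * ((n+1)^2*(S+n)*Y - s * N) \<ge> 0" using Xp key by simp
  ultimately have "((n+1) * X * (s + Y) - (n+2) * Y * s) * ((S+n)*(n+1)) \<ge> 0" by simp
  then have "(n+1) * X * (s + Y) - (n+2) * Y * s \<ge> 0" using Sn
    by (simp add: zero_le_mult_iff)
  then show ?thesis by (simp add: X_def Y_def s_def ss_Suc add.commute)
qed

definition uu :: "nat \<Rightarrow> real" where "uu n = (real n + 1) * aa c d n"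

lemma uu_pos: "uu n > 0" unfolding uu_def using aa_pos by simp

lemma rho_mono: "i \<le> j \<Longrightarrow> uu j * ss i \<le> uu i * ss j"
proof -
  assume ij: "i \<le> j"
  have "decseq (\<lambda>n. uu n / ss n)"
  proof (rule decseq_SucI)
    fix n
    have "uu (Suc n) * ss n \<le> uu n * ss (Suc n)"
      using rho_step[of n] by (simp add: uu_def algebra_simps)
    then show "uu (Suc n) / ss (Suc n) \<le> uu n / ss n"
      using ss_pos[of n] ss_pos[of "Suc n"] by (simp add: divide_simps mult.commute)
  qed
  then have "uu j / ss j \<le> uu i / ss i" using ij by (rule decseqD)
  then show ?thesis using ss_pos[of i] ss_pos[of j] by (simp add: divide_simps mult.commute)
qed


definition Af :: "real \<Rightarrow> real" where "Af y = (\<Sum>n. aa c d n * y^n)"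
definition ee :: "nat \<Rightarrow> real" where "ee n = (case n of 0 \<Rightarrow> 0 | Suc m \<Rightarrow> aa c d m)"
definition G0 :: "real \<Rightarrow> real" where "G0 y = (\<Sum>n. ee n * y^n)"
definition Dd :: "real \<Rightarrow> real" where "Dd y = (\<Sum>n. uu n * y^n)"
definition Zf :: "real \<Rightarrow> real" where "Zf y = (\<Sum>n. ss n * y^n)"

lemma summ_lin: "\<bar>y\<bar> < 1 \<Longrightarrow> summable (\<lambda>n. (real n + 1) * \<bar>y\<bar>^n)"
proof -
  assume y: "\<bar>y\<bar> < 1"
  have "summable (\<lambda>n. diffs (\<lambda>_. 1::real) n * \<bar>y\<bar>^n)"
    by (rule termdiff_converges[where K=1]) (use y in auto)
  then show ?thesis by (simp add: diffs_def add.commute)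
qed

lemma summ_A: "\<bar>y\<bar> < 1 \<Longrightarrow> summable (\<lambda>n. aa c d n * y^n)"
proof -
  assume y: "\<bar>y\<bar> < 1"
  show ?thesis
  proof (rule summable_comparison_test'[where g="\<lambda>n. \<bar>y\<bar>^n" and N=0])
    show "summable (\<lambda>n. \<bar>y\<bar>^n)" using y by simp
    fix n
    have "\<bar>aa c d n\<bar> \<le> 1" using aa_pos[of n] aa_le1[of n] by simp
    then show "norm (aa c d n * y^n) \<le> \<bar>y\<bar>^n"
      by (simp add: abs_mult power_abs mult_left_le_one_le)
  qed
qed

lemma ee_bounds: "0 \<le> ee n" "ee n \<le> 1"
  unfolding ee_def using aa_pos aa_le1 by (auto split: nat.splits intro: less_imp_le)

lemma summ_ee: "\<bar>y\<bar> < 1 \<Longrightarrow> summable (\<lambda>n. ee n * y^n)"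
proof -
  assume y: "\<bar>y\<bar> < 1"
  show ?thesis
  proof (rule summable_comparison_test'[where g="\<lambda>n. \<bar>y\<bar>^n" and N=0])
    show "summable (\<lambda>n. \<bar>y\<bar>^n)" using y by simp
    fix n
    have "\<bar>ee n\<bar> \<le> 1" using ee_bounds[of n] by simp
    then show "norm (ee n * y^n) \<le> \<bar>y\<bar>^n"
      by (simp add: abs_mult power_abs mult_left_le_one_le)
  qed
qed

lemma summ_D: "\<bar>y\<bar> < 1 \<Longrightarrow> summable (\<lambda>n. uu n * y^n)"
proof -
  assume y: "\<bar>y\<bar> < 1"
  show ?thesis
  proof (rule summable_comparison_test'[where g="\<lambda>n. (real n + 1) * \<bar>y\<bar>^n" and N=0])
    show "summable (\<lambda>n. (real n + 1) * \<bar>y\<bar>^n)" using y by (rule summ_lin)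
    fix n
    have "\<bar>uu n\<bar> \<le> real n + 1" using aa_pos[of n] aa_le1[of n] unfolding uu_def
      by (simp add: abs_mult mult_left_le)
    then show "norm (uu n * y^n) \<le> (real n + 1) * \<bar>y\<bar>^n"
      by (simp add: abs_mult power_abs mult_right_mono)
  qed
qed

lemma summ_Z: "\<bar>y\<bar> < 1 \<Longrightarrow> summable (\<lambda>n. ss n * y^n)"
proof -
  assume y: "\<bar>y\<bar> < 1"
  show ?thesis
  proof (rule summable_comparison_test'[where g="\<lambda>n. (real n + 1) * \<bar>y\<bar>^n" and N=0])
    show "summable (\<lambda>n. (real n + 1) * \<bar>y\<bar>^n)" using y by (rule summ_lin)
    fix n
    have "\<bar>ss n\<bar> \<le> real n + 1" using ss_pos[of n] ss_le[of n] by simp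
    then show "norm (ss n * y^n) \<le> (real n + 1) * \<bar>y\<bar>^n"
      by (simp add: abs_mult power_abs mult_right_mono)
  qed
qed

lemma G0_eq: "\<bar>y\<bar> < 1 \<Longrightarrow> G0 y = y * Af y"
proof -
  assume y: "\<bar>y\<bar> < 1"
  have "(\<lambda>n. aa c d n * y^n) sums Af y" unfolding Af_def using summ_A[OF y] by (rule summable_sums)
  then have "(\<lambda>n. y * (aa c d n * y^n)) sums (y * Af y)" by (rule sums_mult)
  then have "(\<lambda>n. ee (Suc n) * y^(Suc n)) sums (y * Af y)" by (simp add: ee_def algebra_simps)
  then have "(\<lambda>n. ee n * y^n) sums (y * Af y + ee 0 * y^0)" using sums_Suc_iff[of "\<lambda>n. ee n * y^n"] by simp
  then have "(\<lambda>n. ee n * y^n) sums (y * Af y)" by (simp add: ee_def)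
  then show ?thesis unfolding G0_def by (simp add: sums_iff)
qed

lemma diffs_ee: "diffs ee = uu"
  by (rule ext) (simp add: diffs_def ee_def uu_def add.commute)

lemma G0_deriv: "\<bar>y\<bar> < 1 \<Longrightarrow> (G0 has_real_derivative Dd y) (at y)"
proof -
  assume y: "\<bar>y\<bar> < 1"
  have "((\<lambda>z. \<Sum>n. ee n * z^n) has_field_derivative (\<Sum>n. diffs ee n * y^n)) (at y)"
    by (rule termdiffs_strong'[where K=1]) (use y summ_ee in auto)
  then show ?thesis unfolding G0_def Dd_def diffs_ee by simp
qed

lemma Z_eq: "\<bar>y\<bar> < 1 \<Longrightarrow> Af y = (1 - y) * Zf y"
proof -
  assume y: "\<bar>y\<bar> < 1"
  define h where "h n = (case n of 0 \<Rightarrow> 0 | Suc m \<Rightarrow> ss m * y^(Suc m))" for n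
  have z: "(\<lambda>n. ss n * y^n) sums Zf y" unfolding Zf_def using summ_Z[OF y] by (rule summable_sums)
  then have "(\<lambda>n. y * (ss n * y^n)) sums (y * Zf y)" by (rule sums_mult)
  then have "(\<lambda>n. h (Suc n)) sums (y * Zf y)" by (simp add: h_def algebra_simps)
  then have "h sums (y * Zf y + h 0)" by (simp only: sums_Suc_iff)
  then have hs: "h sums (y * Zf y)" by (simp add: h_def)
  have "(\<lambda>n. ss n * y^n - h n) sums (Zf y - y * Zf y)" by (rule sums_diff[OF z hs])
  moreover have "(\<lambda>n. ss n * y^n - h n) = (\<lambda>n. aa c d n * y^n)"
  proof
    fix n show "ss n * y^n - h n = aa c d n * y^n"
      by (cases n) (simp_all add: h_def ss_Suc algebra_simps, simp add: ss_def aa_0)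
  qed
  ultimately have "(\<lambda>n. aa c d n * y^n) sums (Zf y - y * Zf y)" by simp
  then show ?thesis unfolding Af_def by (simp add: sums_iff algebra_simps)
qed

lemma Z_pos: "0 \<le> y \<Longrightarrow> y < 1 \<Longrightarrow> Zf y > 0"
  unfolding Zf_def
proof (rule suminf_pos2[where i=0])
  assume y: "0 \<le> y" "y < 1"
  show "summable (\<lambda>n. ss n * y^n)" using y by (intro summ_Z) simp
  show "0 \<le> ss n * y^n" for n using y ss_pos[of n] by simp
  show "0 < ss 0 * y^0" using ss_pos[of 0] by simp
qed

lemma A_pos: "0 \<le> y \<Longrightarrow> y < 1 \<Longrightarrow> Af y > 0"
  unfolding Af_def
proof (rule suminf_pos2[where i=0])
  assume y: "0 \<le> y" "y < 1"
  show "summable (\<lambda>n. aa c d n * y^n)" using y by (intro summ_A) simp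
  show "0 \<le> aa c d n * y^n" for n using y aa_pos[of n] by simp
  show "0 < aa c d 0 * y^0" using aa_pos[of 0] by simp
qed


lemma pow_cross:
  fixes y1 y2 :: real
  assumes "0 < y1" "y1 \<le> y2" "i \<le> j"
  shows "y1^j * y2^i \<le> y1^i * y2^j"
proof -
  obtain k where k: "j = i + k" using assms(3) le_Suc_ex by blast
  have "y1^k \<le> y2^k" using assms by (intro power_mono) auto
  then have "(y1^i * y2^i) * y1^k \<le> (y1^i * y2^i) * y2^k"
    using assms by (intro mult_left_mono) auto
  then show ?thesis by (simp add: k power_add algebra_simps)
qed

lemma Tsym_nonneg:
  fixes y1 y2 :: real
  assumes "0 < y1" "y1 \<le> y2"
  shows "0 \<le> (uu i * ss j - ss i * uu j) * (y1^i*y2^j - y1^j*y2^i)"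
proof (cases "i \<le> j")
  case True
  have "0 \<le> uu i * ss j - ss i * uu j" using rho_mono[OF True] by (simp add: mult.commute)
  moreover have "0 \<le> y1^i*y2^j - y1^j*y2^i" using pow_cross[OF assms True] by simp
  ultimately show ?thesis by simp
next
  case False
  then have ji: "j \<le> i" by simp
  have "uu i * ss j - ss i * uu j \<le> 0" using rho_mono[OF ji] by (simp add: mult.commute)
  moreover have "y1^i*y2^j - y1^j*y2^i \<le> 0" using pow_cross[OF assms ji] by simp
  ultimately show ?thesis by (simp add: mult_nonpos_nonpos)
qed

lemma partial_ineq:
  fixes y1 y2 :: real
  assumes "0 < y1" "y1 \<le> y2"
  shows "(\<Sum>i<N. uu i * y2^i) * (\<Sum>j<N. ss j * y1^j) \<le> (\<Sum>i<N. uu i * y1^i) * (\<Sum>j<N. ss j * y2^j)"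
proof -
  define T where "T i j = (uu i * ss j - ss i * uu j) * (y1^i * y2^j)" for i j
  have e1: "(\<Sum>i<N. uu i * y1^i) * (\<Sum>j<N. ss j * y2^j) = (\<Sum>i<N. \<Sum>j<N. uu i * y1^i * (ss j * y2^j))"
    by (simp add: sum_product)
  have e2: "(\<Sum>i<N. uu i * y2^i) * (\<Sum>j<N. ss j * y1^j) = (\<Sum>i<N. \<Sum>j<N. uu j * y2^j * (ss i * y1^i))"
    by (subst sum.swap) (simp add: sum_product)
  have d: "(\<Sum>i<N. uu i * y1^i) * (\<Sum>j<N. ss j * y2^j) - (\<Sum>i<N. uu i * y2^i) * (\<Sum>j<N. ss j * y1^j)
      = (\<Sum>i<N. \<Sum>j<N. T i j)"
    unfolding e1 e2 T_def by (simp add: sum_subtractf[symmetric] algebra_simps)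
  have sw: "(\<Sum>i<N. \<Sum>j<N. T i j) = (\<Sum>i<N. \<Sum>j<N. T j i)" by (rule sum.swap)
  have "2 * (\<Sum>i<N. \<Sum>j<N. T i j) = (\<Sum>i<N. \<Sum>j<N. T i j + T j i)"
    using sw by (simp add: sum.distrib)
  also have "\<dots> = (\<Sum>i<N. \<Sum>j<N. (uu i * ss j - ss i * uu j) * (y1^i*y2^j - y1^j*y2^i))"
    by (intro sum.cong refl) (simp add: T_def algebra_simps)
  also have "\<dots> \<ge> 0" using Tsym_nonneg[OF assms] by (intro sum_nonneg) auto
  finally have "0 \<le> (\<Sum>i<N. \<Sum>j<N. T i j)" by simp
  with d show ?thesis by simp
qed

lemma DZ_mono:
  assumes "0 < y1" "y1 \<le> y2" "y2 < 1"
  shows "Dd y2 * Zf y1 \<le> Dd y1 * Zf y2"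
proof -
  have a1: "\<bar>y1\<bar> < 1" "\<bar>y2\<bar> < 1" using assms by auto
  have s1: "(\<lambda>n. uu n * y2^n) sums Dd y2" unfolding Dd_def using summ_D[OF a1(2)] by (rule summable_sums)
  have s2: "(\<lambda>n. ss n * y1^n) sums Zf y1" unfolding Zf_def using summ_Z[OF a1(1)] by (rule summable_sums)
  have s3: "(\<lambda>n. uu n * y1^n) sums Dd y1" unfolding Dd_def using summ_D[OF a1(1)] by (rule summable_sums)
  have s4: "(\<lambda>n. ss n * y2^n) sums Zf y2" unfolding Zf_def using summ_Z[OF a1(2)] by (rule summable_sums)
  have l1: "(\<lambda>N. (\<Sum>i<N. uu i * y2^i) * (\<Sum>j<N. ss j * y1^j)) \<longlonglongrightarrow> Dd y2 * Zf y1"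
    using s1 s2 unfolding sums_def by (rule tendsto_mult)
  have l2: "(\<lambda>N. (\<Sum>i<N. uu i * y1^i) * (\<Sum>j<N. ss j * y2^j)) \<longlonglongrightarrow> Dd y1 * Zf y2"
    using s3 s4 unfolding sums_def by (rule tendsto_mult)
  show ?thesis
    by (rule LIMSEQ_le[OF l1 l2]) (use partial_ineq[OF assms(1,2)] in auto)
qed


definition GG :: "real \<Rightarrow> real" where "GG t = ln (G0 (sg t))"
definition phi :: "real \<Rightarrow> real" where "phi y = Dd y / Zf y"

lemma G0_pos: "0 < y \<Longrightarrow> y < 1 \<Longrightarrow> G0 y > 0"
  using G0_eq[of y] A_pos[of y] by simp

lemma GG_deriv: "(GG has_real_derivative phi (sg t)) (at t)"
proof -
  define y where "y = sg t"
  have y0: "0 < y" and y1: "y < 1" using sg_pos sg_lt1 by (auto simp: y_def)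
  have ya: "\<bar>y\<bar> < 1" using y0 y1 by simp
  have G0y: "G0 y = y * ((1 - y) * Zf y)" using G0_eq[OF ya] Z_eq[OF ya] by simp
  have Zp: "Zf y > 0" using Z_pos y0 y1 by simp
  have d1: "((\<lambda>t. G0 (sg t)) has_real_derivative (Dd y * (sg t * (1 - sg t)))) (at t)"
    using DERIV_chain2[OF G0_deriv[OF ya[unfolded y_def]] sg_deriv] by (simp add: y_def)
  have d2: "((\<lambda>t. ln (G0 (sg t))) has_real_derivative (1 / G0 y * (Dd y * (sg t * (1 - sg t))))) (at t)"
    using DERIV_chain2[OF DERIV_ln_divide[OF G0_pos[OF y0 y1], unfolded y_def] d1[unfolded y_def]] by (simp add: y_def)
  have "1 / G0 y * (Dd y * (sg t * (1 - sg t))) = phi y"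
    unfolding G0y phi_def using y0 y1 Zp by (simp add: y_def[symmetric] field_simps)
  then show ?thesis using d2 unfolding GG_def[abs_def] y_def by simp
qed

lemma phi_anti: "s \<le> t \<Longrightarrow> phi (sg t) \<le> phi (sg s)"
proof -
  assume st: "s \<le> t"
  have "Dd (sg t) * Zf (sg s) \<le> Dd (sg s) * Zf (sg t)"
    by (rule DZ_mono) (use sg_pos sg_lt1 sg_mono[OF st] in auto)
  moreover have "Zf (sg s) > 0" "Zf (sg t) > 0" using Z_pos sg_pos sg_lt1 less_imp_le by blast+
  ultimately show ?thesis unfolding phi_def by (simp add: divide_simps)
qed

end

lemma mid_concave:
  fixes G G' :: "real \<Rightarrow> real"
  assumes der: "\<And>x. (G has_real_derivative G' x) (at x)"
    and anti: "\<And>s t. s \<le> t \<Longrightarrow> G' t \<le> G' s"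
  shows "G a + G b \<le> 2 * G ((a+b)/2)"
proof -
  have main: "G a + G b \<le> 2 * G ((a+b)/2)" if ab: "a < b" for a b
  proof -
    define m where "m = (a+b)/2"
    have am: "a < m" and mb: "m < b" using ab by (auto simp: m_def)
    obtain z1 where z1: "a < z1" "z1 < m" "G m - G a = (m - a) * G' z1"
      using MVT2[OF am der] by blast
    obtain z2 where z2: "m < z2" "z2 < b" "G b - G m = (b - m) * G' z2"
      using MVT2[OF mb der] by blast
    have "G' z2 \<le> G' z1" using z1 z2 by (intro anti) simp
    moreover have "b - m = m - a" "m - a > 0" using am by (auto simp: m_def field_simps)
    ultimately have "(b - m) * G' z2 \<le> (m - a) * G' z1" by (simp add: mult_left_mono)
    then show ?thesis using z1 z2 by (simp add: m_def[symmetric])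
  qed
  consider "a < b" | "a = b" | "b < a" by linarith
  then show ?thesis
  proof cases
    case 1 then show ?thesis by (rule main)
  next
    case 2 then show ?thesis by simp
  next
    case 3 then show ?thesis using main[OF 3] by (simp add: add.commute)
  qed
qed




theorem mainTheorem15:
  fixes c d x p q :: real
    and g :: "real \<Rightarrow> real"
  assumes "c > 0" and "d > 0" and "1 / c + 1 / d \<ge> 1"
    and "\<And>y. 0 < y \<Longrightarrow> y < 1 \<Longrightarrow> g y = y * hyp2F1 c d (c + d) y"
    and "x > 0"
  shows "g (x powr p / (1 + x powr p)) * g (x powr q / (1 + x powr q))
         \<le> (g (x powr ((p + q) / 2) / (1 + x powr ((p + q) / 2)))) ^ 2"
proof -
  note cp = assms(1) and dp = assms(2)
  have "1 \<le> (c + d) / (c * d)" using assms(3) cp dp by (simp add: field_simps)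
  then have cd: "c * d \<le> c + d" using cp dp by (simp add: le_divide_eq)
  have hyp: "hyp2F1 c d (c+d) y = Af c d y" for y
    by (simp add: hyp2F1_def Af_def[OF cp dp cd] aa_def divide_inverse mult_ac)
  have gG: "g (sg t) = G0 c d (sg t)" for t
    using assms(4)[OF sg_pos sg_lt1] G0_eq[OF cp dp cd, of "sg t"] sg_pos[of t] sg_lt1[of t]
    by (simp add: hyp)
  have conv: "x powr r / (1 + x powr r) = sg (r * ln x)" for r
    using assms(5) by (simp add: powr_def sg_def)
  have Gp: "G0 c d (sg t) > 0" for t using G0_pos[OF cp dp cd sg_pos sg_lt1] .
  have key: "GG c d (p * ln x) + GG c d (q * ln x) \<le> 2 * GG c d ((p * ln x + q * ln x) / 2)"
    by (rule mid_concave[where G' = "\<lambda>t. phi c d (sg t)"])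
       (use GG_deriv[OF cp dp cd] phi_anti[OF cp dp cd] in auto)
  have mid: "(p * ln x + q * ln x) / 2 = ((p + q) / 2) * ln x" by (simp add: field_simps)
  define A where "A = G0 c d (sg (p * ln x))"
  define B where "B = G0 c d (sg (q * ln x))"
  define M where "M = G0 c d (sg (((p + q) / 2) * ln x))"
  have Ap: "A > 0" and Bp: "B > 0" and Mp: "M > 0" using Gp by (auto simp: A_def B_def M_def)
  have "ln (A * B) \<le> ln (M ^ 2)"
    using key Ap Bp Mp unfolding GG_def[OF cp dp cd] mid by (simp add: ln_mult ln_realpow A_def B_def M_def)
  then have "A * B \<le> M ^ 2" using Ap Bp Mp by simp
  then show ?thesis unfolding conv gG by (simp add: A_def B_def M_def)
qed

end
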